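(* Let $S_1=(x_1,y_1),\ldots,S_4=(x_4,y_4)$ be four points in the plane with $x_1\le x_2\le x_3\le x_4$, and let $\delta_1,\ldots,\delta_4$ be positive integers. For $i\in\{1,\dots,4\}$ define the pivot point $$P_i=\left(x_i+\frac{\sum_{j=1}^4\delta_j(x_j-x_i)^2}{\sum_{j=1}^4\delta_j(x_j-x_i)},\ y_i+\frac{\sum_{j=1}^4\delta_j(x_j-x_i)(y_j-y_i)}{\sum_{j=1}^4\delta_j(x_j-x_i)}\right)$$ whenever the denominator is nonzero. Fix $i$ such that $P_i$ is defined and the three points $S_a,S_b,S_c$ ($a<b<c$, $\{a,b,c\}=\{1,2,3,4\}\setminus\{i\}$) are not collinear, and let $(\lambda_a,\lambda_b,\lambda_c)$ be the barycentric coordinates of $P_i$ with respect to the triangle $S_aS_bS_c$. Then the sign pattern of $(\lambda_a,\lambda_b,\lambda_c)$ is neither $+-+$ (i.e. $\lambda_a>0,\lambda_b<0,\lambda_c>0$) nor $-+-$ (i.e. $\lambda_a<0,\lambda_b>0,\lambda_c<0$).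
   Context: The pivot point $P_i$ is the point through which the least-squares regression line of the data, in which each $S_j$ appears $\delta_j$ times, always passes regardless of how many additional copies of $S_i$ are added. For a non-degenerate triangle $ABC$, the barycentric coordinates of $Q$ are the unique reals $(\lambda_A,\lambda_B,\lambda_C)$ with sum $1$ and $Q=\lambda_AA+\lambda_BB+\lambda_CC$; their sign pattern determines which of the seven regions cut out by the edge-lines of the triangle contains $Q$. *)

theory Defs
  imports "HOL-Analysis.Analysis"
begin

definition pivot_den :: "(nat \<Rightarrow> real) \<Rightarrow> (nat \<Rightarrow> nat) \<Rightarrow> nat \<Rightarrow> real" where
  "pivot_den x \<delta> i = (\<Sum>j=1..4. real (\<delta> j) * (x j - x i))"

definition pivot :: "(nat \<Rightarrow> real) \<Rightarrow> (nat \<Rightarrow> real) \<Rightarrow> (nat \<Rightarrow> nat) \<Rightarrow> nat \<Rightarrow> real \<times> real" where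
  "pivot x y \<delta> i =
     (x i + (\<Sum>j=1..4. real (\<delta> j) * (x j - x i)^2) / pivot_den x \<delta> i,
      y i + (\<Sum>j=1..4. real (\<delta> j) * (x j - x i) * (y j - y i)) / pivot_den x \<delta> i)"

definition collinear3 :: "real \<times> real \<Rightarrow> real \<times> real \<Rightarrow> real \<times> real \<Rightarrow> bool" where
  "collinear3 A B C \<longleftrightarrow>
     (fst B - fst A) * (snd C - snd A) - (snd B - snd A) * (fst C - fst A) = 0"

definition barycentric ::
  "real \<times> real \<Rightarrow> real \<times> real \<Rightarrow> real \<times> real \<Rightarrow> real \<times> real \<Rightarrow> real \<times> real \<times> real" where
  "barycentric A B C Q = (THE (la, lb, lc). la + lb + lc = 1 \<and>
      Q = la *\<^sub>R A + lb *\<^sub>R B + lc *\<^sub>R C)"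

end

theory Submission
  imports Defs
begin

lemma bary_eq:
  assumes nc: "\<not> collinear3 A B C"
    and s: "la + lb + lc = 1" and q: "Q = la *\<^sub>R A + lb *\<^sub>R B + lc *\<^sub>R C"
  shows "barycentric A B C Q = (la, lb, lc)"
  unfolding barycentric_def
proof (rule the_equality)
  show "case (la, lb, lc) of (la, lb, lc) \<Rightarrow> la + lb + lc = 1 \<and> Q = la *\<^sub>R A + lb *\<^sub>R B + lc *\<^sub>R C"
    using s q by simp
next
  fix t :: "real \<times> real \<times> real"
  assume h: "case t of (la, lb, lc) \<Rightarrow> la + lb + lc = 1 \<and> Q = la *\<^sub>R A + lb *\<^sub>R B + lc *\<^sub>R C"
  obtain ma mb mc where t: "t = (ma, mb, mc)" by (cases t) auto
  obtain a1 a2 b1 b2 c1 c2 where AB: "A = (a1,a2)" "B = (b1,b2)" "C = (c1,c2)"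
    by (cases A, cases B, cases C) auto
  from h t have s2: "ma + mb + mc = 1" and q2: "Q = ma *\<^sub>R A + mb *\<^sub>R B + mc *\<^sub>R C" by auto
  have e1: "ma*a1 + mb*b1 + mc*c1 = la*a1 + lb*b1 + lc*c1"
  proof -
    have "fst Q = la*a1 + lb*b1 + lc*c1" using q AB by simp
    moreover have "fst Q = ma*a1 + mb*b1 + mc*c1" using q2 AB by simp
    ultimately show ?thesis by simp
  qed
  have e2: "ma*a2 + mb*b2 + mc*c2 = la*a2 + lb*b2 + lc*c2"
  proof -
    have "snd Q = la*a2 + lb*b2 + lc*c2" using q AB by simp
    moreover have "snd Q = ma*a2 + mb*b2 + mc*c2" using q2 AB by simp
    ultimately show ?thesis by simp
  qed
  have d: "(b1 - a1) * (c2 - a2) - (b2 - a2) * (c1 - a1) \<noteq> 0"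
    using nc AB unfolding collinear3_def by simp
  define p where "p = mb - lb"
  define r where "r = mc - lc"
  have ma: "ma - la = - p - r" using s s2 unfolding p_def r_def by linarith
  have f1: "p * (b1 - a1) + r * (c1 - a1) = 0"
  proof -
    have "(ma - la)*a1 + p*b1 + r*c1 = 0" using e1 unfolding p_def r_def by (simp add: algebra_simps)
    thus ?thesis using ma by (simp add: algebra_simps)
  qed
  have f2: "p * (b2 - a2) + r * (c2 - a2) = 0"
  proof -
    have "(ma - la)*a2 + p*b2 + r*c2 = 0" using e2 unfolding p_def r_def by (simp add: algebra_simps)
    thus ?thesis using ma by (simp add: algebra_simps)
  qed
  have "p * ((b1 - a1) * (c2 - a2) - (b2 - a2) * (c1 - a1)) = 0"
  proof -
    have "p * ((b1 - a1) * (c2 - a2) - (b2 - a2) * (c1 - a1)) = (c2 - a2) * (p * (b1 - a1) + r * (c1 - a1)) - (c1 - a1) * (p * (b2 - a2) + r * (c2 - a2))"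
      by (simp add: algebra_simps)
    thus ?thesis using f1 f2 by simp
  qed
  hence p0: "p = 0" using d by simp
  have "r * ((b1 - a1) * (c2 - a2) - (b2 - a2) * (c1 - a1)) = 0"
  proof -
    have "r * ((b1 - a1) * (c2 - a2) - (b2 - a2) * (c1 - a1)) = (b1 - a1) * (p * (b2 - a2) + r * (c2 - a2)) - (b2 - a2) * (p * (b1 - a1) + r * (c1 - a1))"
      by (simp add: algebra_simps)
    thus ?thesis using f1 f2 by simp
  qed
  hence r0: "r = 0" using d by simp
  show "t = (la, lb, lc)" using t p0 r0 ma unfolding p_def r_def by simp
qed

lemma mono4:
  fixes x :: "nat \<Rightarrow> real"
  assumes "x 1 \<le> x 2" "x 2 \<le> x 3" "x 3 \<le> x 4" "j \<in> {1..4}" "k \<in> {1..4}" "j \<le> k"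
  shows "x j \<le> x k"
proof -
  have j: "j = 1 \<or> j = 2 \<or> j = 3 \<or> j = 4" using assms(4) by auto
  have k: "k = 1 \<or> k = 2 \<or> k = 3 \<or> k = 4" using assms(5) by auto
  show ?thesis using j k assms(1-3,6) by auto
qed

theorem corollary1:
  fixes x y :: "nat \<Rightarrow> real" and \<delta> :: "nat \<Rightarrow> nat" and i a b c :: nat
    and la lb lc :: real
  assumes "x 1 \<le> x 2" "x 2 \<le> x 3" "x 3 \<le> x 4"
    and "\<forall>j\<in>{1..4}. \<delta> j > 0"
    and "i \<in> {1..4}"
    and "pivot_den x \<delta> i \<noteq> 0"
    and "a < b" "b < c" "{a, b, c} = {1..4} - {i}"
    and "\<not> collinear3 (x a, y a) (x b, y b) (x c, y c)"
    and "barycentric (x a, y a) (x b, y b) (x c, y c) (pivot x y \<delta> i) = (la, lb, lc)"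
  shows "\<not> (la > 0 \<and> lb < 0 \<and> lc > 0) \<and> \<not> (la < 0 \<and> lb > 0 \<and> lc < 0)"
proof -
  define D where "D = pivot_den x \<delta> i"
  have D0: "D \<noteq> 0" using assms(6) D_def by simp
  have set: "{1..4} = insert i {a, b, c}" unfolding assms(9) using assms(5) by (rule insert_Diff[symmetric])
  have ni: "i \<notin> {a, b, c}" unfolding assms(9) by simp
  have abc0: "a \<in> {a,b,c}" "b \<in> {a,b,c}" "c \<in> {a,b,c}" by simp_all
  have abc: "a \<in> {1..4}" "b \<in> {1..4}" "c \<in> {1..4}" using abc0 unfolding assms(9) by (simp_all only: Diff_iff)
  have dist: "a \<noteq> b" "a \<noteq> c" "b \<noteq> c" using assms(7,8) by auto
  have sum4: "\<And>f::nat \<Rightarrow> real. (\<Sum>j=1..4. f j) = f i + f a + f b + f c"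
    using set ni dist by (simp add: add.assoc)
  define wa where "wa = real (\<delta> a) * (x a - x i) / D"
  define wb where "wb = real (\<delta> b) * (x b - x i) / D"
  define wc where "wc = real (\<delta> c) * (x c - x i) / D"
  have Dexp: "D = real (\<delta> a) * (x a - x i) + real (\<delta> b) * (x b - x i) + real (\<delta> c) * (x c - x i)"
    unfolding D_def pivot_den_def sum4 by simp
  have ssum: "wa + wb + wc = 1"
  proof -
    have "wa + wb + wc = (real (\<delta> a) * (x a - x i) + real (\<delta> b) * (x b - x i) + real (\<delta> c) * (x c - x i)) / D"
      unfolding wa_def wb_def wc_def by (simp add: add_divide_distrib)
    also have "\<dots> = 1" using Dexp D0 by simp
    finally show ?thesis .
  qed
  have p1: "fst (pivot x y \<delta> i) = wa * x a + wb * x b + wc * x c"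
  proof -
    define N where "N = (\<Sum>j=1..4. real (\<delta> j) * (x j - x i)^2)"
    have N: "N = real (\<delta> a) * (x a - x i)^2 + real (\<delta> b) * (x b - x i)^2 + real (\<delta> c) * (x c - x i)^2"
      unfolding N_def sum4 by simp
    have "fst (pivot x y \<delta> i) = x i + N / D" unfolding pivot_def N_def D_def by simp
    also have "\<dots> = (x i * D + N) / D" using D0 by (simp add: field_simps)
    also have "x i * D + N = real (\<delta> a) * (x a - x i) * x a + real (\<delta> b) * (x b - x i) * x b + real (\<delta> c) * (x c - x i) * x c"
      unfolding N Dexp by (simp add: algebra_simps power2_eq_square)
    also have "\<dots> / D = wa * x a + wb * x b + wc * x c"
      unfolding wa_def wb_def wc_def by (simp add: add_divide_distrib)
    finally show ?thesis .
  qed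
  have p2: "snd (pivot x y \<delta> i) = wa * y a + wb * y b + wc * y c"
  proof -
    define N where "N = (\<Sum>j=1..4. real (\<delta> j) * (x j - x i) * (y j - y i))"
    have N: "N = real (\<delta> a) * (x a - x i) * (y a - y i) + real (\<delta> b) * (x b - x i) * (y b - y i) + real (\<delta> c) * (x c - x i) * (y c - y i)"
      unfolding N_def sum4 by simp
    have "snd (pivot x y \<delta> i) = y i + N / D" unfolding pivot_def N_def D_def by simp
    also have "\<dots> = (y i * D + N) / D" using D0 by (simp add: field_simps)
    also have "y i * D + N = real (\<delta> a) * (x a - x i) * y a + real (\<delta> b) * (x b - x i) * y b + real (\<delta> c) * (x c - x i) * y c"
      unfolding N Dexp by (simp add: algebra_simps)
    also have "\<dots> / D = wa * y a + wb * y b + wc * y c"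
      unfolding wa_def wb_def wc_def by (simp add: add_divide_distrib)
    finally show ?thesis .
  qed
  have "pivot x y \<delta> i = wa *\<^sub>R (x a, y a) + wb *\<^sub>R (x b, y b) + wc *\<^sub>R (x c, y c)"
    using p1 p2 by (simp add: prod_eq_iff)
  hence "barycentric (x a, y a) (x b, y b) (x c, y c) (pivot x y \<delta> i) = (wa, wb, wc)"
    using bary_eq assms(10) ssum by blast
  hence L: "la = wa" "lb = wb" "lc = wc" using assms(11) by auto
  have xab: "x a \<le> x b" using mono4[OF assms(1-3) abc(1,2)] assms(7) by simp
  have xbc: "x b \<le> x c" using mono4[OF assms(1-3) abc(2,3)] assms(8) by simp
  have da: "real (\<delta> a) > 0" "real (\<delta> b) > 0" "real (\<delta> c) > 0" using assms(4) abc by auto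
  have sa: "la * D = real (\<delta> a) * (x a - x i)" using L wa_def D0 by simp
  have sb: "lb * D = real (\<delta> b) * (x b - x i)" using L wb_def D0 by simp
  have sc: "lc * D = real (\<delta> c) * (x c - x i)" using L wc_def D0 by simp
  have sgn: "\<And>l d u. (d::real) > 0 \<Longrightarrow> l * D = d * u \<Longrightarrow> (l > 0 \<longleftrightarrow> (if D > 0 then u > 0 else u < 0)) \<and> (l < 0 \<longleftrightarrow> (if D > 0 then u < 0 else u > 0))"
  proof -
    fix l d u :: real assume d: "d > 0" and e: "l * D = d * u"
    have "sgn (l * D) = sgn (d * u)" using e by simp
    hence "sgn l * sgn D = sgn u" using d by (simp add: sgn_mult)
    thus "(l > 0 \<longleftrightarrow> (if D > 0 then u > 0 else u < 0)) \<and> (l < 0 \<longleftrightarrow> (if D > 0 then u < 0 else u > 0))"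
      using D0 by (auto simp: sgn_if split: if_splits)
  qed
  show ?thesis
    using sgn[OF da(1) sa] sgn[OF da(2) sb] sgn[OF da(3) sc] xab xbc
    by (auto split: if_splits)
qed

end
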